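(* Let $\beta \in \mathbb{C}\setminus\mathbb{R}$ be a root of a quadratic polynomial with integer coefficients. Then there is a nonzero polynomial $f \in \mathbb{Z}_{\geq 0}[x]$ with $f(\beta) = 0$; consequently $p_\beta(0) = \infty$, and $p_\beta(\alpha) \in \{0, \infty\}$ for every $\alpha \in \mathbb{C}$.
   Context: For $\beta, \alpha \in \mathbb{C}$, $p_\beta(\alpha) \in \mathbb{Z}_{\geq 0}\cup\{\infty\}$ is the number of polynomials $f \in \mathbb{Z}_{\geq 0}[x]$ (non-negative integer coefficients) with $f(\beta) = \alpha$. *)

theory Defs
  imports "HOL-Computational_Algebra.Polynomial" "HOL-Library.Extended_Nat" Complex_Main
begin

text \<open>Polynomials in Z_{>=0}[x] are represented as nat poly; evaluation at a complex
  number goes through the coercion of the coefficients.\<close>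

definition eval_nat_poly :: "nat poly \<Rightarrow> complex \<Rightarrow> complex" where
  "eval_nat_poly f z = poly (map_poly of_nat f) z"

definition p_count :: "complex \<Rightarrow> complex \<Rightarrow> enat" where
  "p_count \<beta> \<alpha> =
     (let S = {f :: nat poly. eval_nat_poly f \<beta> = \<alpha>}
      in if finite S then enat (card S) else \<infinity>)"

end

theory Submission imports Defs begin

lemma mp_add: "map_poly (of_nat :: nat \<Rightarrow> complex) (p + q) = map_poly of_nat p + map_poly of_nat q"
  by (simp add: poly_eq_iff coeff_map_poly)

lemma mp_mult: "map_poly (of_nat :: nat \<Rightarrow> complex) (p * q) = map_poly of_nat p * map_poly of_nat q"
  by (simp add: poly_eq_iff coeff_map_poly coeff_mult)

lemma ev_add: "eval_nat_poly (p + q) z = eval_nat_poly p z + eval_nat_poly q z"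
  by (simp add: eval_nat_poly_def mp_add)
lemma ev_mult: "eval_nat_poly (p * q) z = eval_nat_poly p z * eval_nat_poly q z"
  by (simp add: eval_nat_poly_def mp_mult)

lemma ev_pCons: "eval_nat_poly (pCons a p) z = of_nat a + z * eval_nat_poly p z"
  by (simp add: eval_nat_poly_def map_poly_pCons)

lemma ev_pcomp: "eval_nat_poly (pcompose g [:0,0,1:]) z = eval_nat_poly g (z^2)"
proof (induction g)
  case (pCons a p)
  have "pcompose (pCons a p) [:0,0,1:] = [:a:] + [:0,0,1:] * pcompose p [:0,0,1:]"
    by (simp add: pcompose_pCons)
  then have "eval_nat_poly (pcompose (pCons a p) [:0,0,1:]) z = of_nat a + z^2 * eval_nat_poly (pcompose p [:0,0,1:]) z"
    by (simp only: ev_add ev_mult ev_pCons) (simp add: eval_nat_poly_def power2_eq_square)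
  then show ?case using pCons by (simp add: ev_pCons)
qed (simp add: eval_nat_poly_def)

lemma direct:
  fixes a b c :: int
  assumes "a > 0" "c > 0" "b^2 \<le> 2*a*c"
  shows "\<exists>f::nat poly. f \<noteq> 0 \<and> (\<forall>z::complex. of_int a * z^2 + of_int b * z + of_int c = 0 \<longrightarrow> eval_nat_poly f z = 0)"
proof (intro exI conjI allI impI)
  let ?f = "[:nat (c^2), 0, nat (2*a*c - b^2), 0, nat (a^2):]"
  show "?f \<noteq> 0" using assms by simp
  fix z :: complex
  assume h: "of_int a * z^2 + of_int b * z + of_int c = 0"
  have e1: "(of_nat (nat (c^2)) :: complex) = of_int (c^2)" using assms by simp
  have e2: "(of_nat (nat (2*a*c - b^2)) :: complex) = of_int (2*a*c - b^2)" using assms by simp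
  have e3: "(of_nat (nat (a^2)) :: complex) = of_int (a^2)" using assms by simp
  have "eval_nat_poly ?f z = of_int (c^2) + z * (z * (of_int (2*a*c - b^2) + z * (z * of_int (a^2))))"
    unfolding ev_pCons e1 e2 e3 by (simp add: eval_nat_poly_def)
  also have "\<dots> = (of_int a * z^2 + of_int b * z + of_int c) * (of_int a * z^2 - of_int b * z + of_int c)"
    by (simp add: algebra_simps power2_eq_square)
  also have "\<dots> = 0" using h by simp
  finally show "eval_nat_poly ?f z = 0" .
qed

lemma main:
  "\<And>a b c::int. a > 0 \<Longrightarrow> c > 0 \<Longrightarrow> b^2 < 4*a*c \<Longrightarrow> 4*a*c \<le> 2^n * (4*a*c - b^2) \<Longrightarrow>
   \<exists>f::nat poly. f \<noteq> 0 \<and> (\<forall>z::complex. of_int a * z^2 + of_int b * z + of_int c = 0 \<longrightarrow> eval_nat_poly f z = 0)"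
proof (induction n)
  case (0 a b c)
  then have "b^2 \<le> 2*a*c" by simp
  then show ?case using direct 0 by blast
next
  case (Suc n a b c)
  show ?case
  proof (cases "b^2 \<le> 2*a*c")
    case True
    then show ?thesis using direct Suc by blast
  next
    case False
    define A where "A = a^2"
    define B where "B = 2*a*c - b^2"
    define C where "C = c^2"
    have A: "A > 0" using Suc by (simp add: A_def)
    have C: "C > 0" using Suc by (simp add: C_def)
    have b0: "b^2 > 0" using False Suc by (smt (verit) mult_pos_pos zero_less_power2)
    have disc: "4*A*C - B^2 = b^2 * (4*a*c - b^2)" by (simp add: A_def B_def C_def algebra_simps power2_eq_square)
    have D: "B^2 < 4*A*C" using disc b0 Suc.prems(3) by (smt (verit) mult_pos_pos)
    have "4*A*C = (a*c) * (4*a*c)" by (simp add: A_def C_def algebra_simps power2_eq_square)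
    also have "\<dots> \<le> (a*c) * (2^Suc n * (4*a*c - b^2))"
      using Suc.prems by (intro mult_left_mono) auto
    also have "\<dots> = 2^n * ((2*a*c) * (4*a*c - b^2))" by (simp add: algebra_simps)
    also have "\<dots> \<le> 2^n * (b^2 * (4*a*c - b^2))"
      using False Suc.prems(3) by (intro mult_left_mono mult_right_mono) auto
    finally have M: "4*A*C \<le> 2^n * (4*A*C - B^2)" using disc by simp
    obtain g where g: "g \<noteq> 0" and gz: "\<And>w::complex. of_int A * w^2 + of_int B * w + of_int C = 0 \<Longrightarrow> eval_nat_poly g w = 0"
      using Suc.IH[OF A C D M] by blast
    show ?thesis
    proof (intro exI conjI allI impI)
      show "pcompose g [:0,0,1:] \<noteq> 0" using g pcompose_eq_0 by fastforce
      fix z :: complex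
      assume h: "of_int a * z^2 + of_int b * z + of_int c = 0"
      have "of_int A * (z^2)^2 + of_int B * z^2 + of_int C
           = (of_int a * z^2 + of_int b * z + of_int c) * (of_int a * z^2 - of_int b * z + of_int c)"
        by (simp add: A_def B_def C_def algebra_simps power2_eq_square)
      also have "\<dots> = 0" using h by simp
      finally have "eval_nat_poly g (z^2) = 0" by (rule gz)
      then show "eval_nat_poly (pcompose g [:0,0,1:]) z = 0" by (simp only: ev_pcomp)
    qed
  qed
qed


lemma inf_sol:
  assumes f: "f \<noteq> 0" "eval_nat_poly f \<beta> = 0" and g: "eval_nat_poly g \<beta> = \<alpha>"
  shows "infinite {h. eval_nat_poly h \<beta> = \<alpha>}"
proof -
  let ?h = "\<lambda>k. g + f * monom 1 k"
  have inj: "inj ?h"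
  proof (rule injI)
    fix k l assume "?h k = ?h l"
    then have "f * monom 1 k = f * monom 1 l" by simp
    then have "degree (f * monom 1 k) = degree (f * monom 1 l)" by simp
    then show "k = l" using f by (simp add: degree_mult_eq degree_monom_eq)
  qed
  have "range ?h \<subseteq> {h. eval_nat_poly h \<beta> = \<alpha>}"
    using f g by (auto simp: ev_add ev_mult)
  moreover have "infinite (range ?h)" using inj by (simp add: finite_image_iff)
  ultimately show ?thesis using finite_subset by blast
qed

lemma quad_coeffs:
  fixes q :: "int poly"
  assumes "degree q = 2"
  shows "poly (map_poly of_int q) (z::complex) = of_int (coeff q 2) * z^2 + of_int (coeff q 1) * z + of_int (coeff q 0)"
  using assms by (simp add: poly_altdef degree_map_poly coeff_map_poly numeral_2_eq_2 atMost_Suc)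

lemma disc_neg:
  fixes a b c :: int and \<beta> :: complex
  assumes "\<beta> \<notin> \<real>" "a \<noteq> 0" "of_int a * \<beta>^2 + of_int b * \<beta> + of_int c = 0"
  shows "b^2 < 4*a*c"
proof (rule ccontr)
  assume "\<not> ?thesis"
  then have D: "b^2 - 4*a*c \<ge> 0" by simp
  define w where "w = 2 * of_int a * \<beta> + of_int b"
  have "w^2 = 4 * of_int a * (of_int a * \<beta>^2 + of_int b * \<beta> + of_int c) + of_int (b^2 - 4*a*c)"
    by (simp add: w_def algebra_simps power2_eq_square)
  also have "\<dots> = (complex_of_real (sqrt (of_int (b^2 - 4*a*c))))^2"
  proof -
    have r: "real_of_int (b^2 - 4*a*c) \<ge> 0" using D by linarith
    have "(complex_of_real (sqrt (of_int (b^2 - 4*a*c))))^2 = complex_of_real ((sqrt (of_int (b^2 - 4*a*c)))^2)"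
      by (simp only: of_real_power)
    also have "\<dots> = of_int (b^2 - 4*a*c)" using r by (simp only: real_sqrt_pow2) simp
    finally show ?thesis using assms(3) by simp
  qed
  finally have "w = complex_of_real (sqrt (of_int (b^2 - 4*a*c))) \<or> w = - complex_of_real (sqrt (of_int (b^2 - 4*a*c)))"
    by (simp add: power2_eq_iff)
  then have "w \<in> \<real>" by auto
  moreover have "\<beta> = (w - of_int b) / (2 * of_int a)" using assms(2) by (simp add: w_def field_simps)
  ultimately have "\<beta> \<in> \<real>" by simp
  then show False using assms(1) by simp
qed


lemma exists_f:
  fixes \<beta> :: complex
  assumes nonreal: "\<beta> \<notin> \<real>"
    and quad: "\<exists>q :: int poly. degree q = 2 \<and> poly (map_poly of_int q) \<beta> = 0"
  shows "\<exists>f :: nat poly. f \<noteq> 0 \<and> eval_nat_poly f \<beta> = 0"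
proof -
  obtain q :: "int poly" where q: "degree q = 2" "poly (map_poly of_int q) \<beta> = 0" using quad by blast
  define a0 where "a0 = coeff q 2"
  define b0 where "b0 = coeff q 1"
  define c0 where "c0 = coeff q 0"
  have a0: "a0 \<noteq> 0" proof
    assume "a0 = 0"
    then have "coeff q (degree q) = 0" using q(1) by (simp add: a0_def)
    then have "q = 0" by simp
    then show False using q(1) by simp
  qed
  have e0: "of_int a0 * \<beta>^2 + of_int b0 * \<beta> + of_int c0 = 0"
    using q quad_coeffs[OF q(1)] by (simp add: a0_def b0_def c0_def)
  define s where "s = (if a0 > 0 then 1 else -1 :: int)"
  define a where "a = s * a0"
  define b where "b = s * b0"
  define c where "c = s * c0"
  have s2: "s^2 = 1" by (simp add: s_def)
  have apos: "a > 0" using a0 by (simp add: a_def s_def)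
  have e: "of_int a * \<beta>^2 + of_int b * \<beta> + of_int c = 0"
  proof -
    have "of_int a * \<beta>^2 + of_int b * \<beta> + of_int c = of_int s * (of_int a0 * \<beta>^2 + of_int b0 * \<beta> + of_int c0)"
      by (simp add: a_def b_def c_def algebra_simps)
    then show ?thesis using e0 by simp
  qed
  have disc: "b^2 < 4*a*c" using disc_neg[OF nonreal _ e] apos by simp
  have cpos: "c > 0" using disc apos
    by (smt (verit) mult_nonneg_nonpos zero_le_power2)
  define n where "n = nat (4*a*c)"
  have "4*a*c = int n" using apos cpos by (simp add: n_def)
  also have "\<dots> \<le> 2^n" by (metis of_nat_less_two_power less_imp_le of_nat_numeral of_nat_power)
  also have "\<dots> \<le> 2^n * (4*a*c - b^2)" using disc by simp
  finally have M: "4*a*c \<le> 2^n * (4*a*c - b^2)" .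
  show ?thesis using main[OF apos cpos disc M] e by blast
qed

theorem proposition9:
  fixes \<beta> :: complex
  assumes nonreal: "\<beta> \<notin> \<real>"
    and quad: "\<exists>q :: int poly. degree q = 2 \<and> poly (map_poly of_int q) \<beta> = 0"
  shows "(\<exists>f :: nat poly. f \<noteq> 0 \<and> eval_nat_poly f \<beta> = 0)
         \<and> p_count \<beta> 0 = \<infinity>
         \<and> (\<forall>\<alpha> :: complex. p_count \<beta> \<alpha> \<in> {0, \<infinity>})"
proof -
  obtain f :: "nat poly" where f: "f \<noteq> 0" "eval_nat_poly f \<beta> = 0" using exists_f[OF assms] by blast
  have all: "p_count \<beta> \<alpha> \<in> {0, \<infinity>}" for \<alpha>
  proof (cases "\<exists>g. eval_nat_poly g \<beta> = \<alpha>")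
    case True
    then obtain g where "eval_nat_poly g \<beta> = \<alpha>" by blast
    then have "infinite {h. eval_nat_poly h \<beta> = \<alpha>}" using inf_sol f by blast
    then show ?thesis by (simp add: p_count_def)
  next
    case False
    then have "{h. eval_nat_poly h \<beta> = \<alpha>} = {}" by blast
    then show ?thesis by (simp add: p_count_def zero_enat_def)
  qed
  have "infinite {h. eval_nat_poly h \<beta> = 0}" using inf_sol[OF f f(2)] .
  then have "p_count \<beta> 0 = \<infinity>" by (simp add: p_count_def)
  then show ?thesis using f all by blast
qed

end
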